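(* Let $s\ge 1$ be an integer and $0<\epsilon<1$ a constant. For integers $2\le n_0\le n_1\le\dots\le n_s$, let $k_i=\frac{\log n_s}{\log n_i}$ for $0\le i\le s-1$, let $x_0$ be the unique root of the equation $(s+\epsilon)x-1-\sum_{j=0}^{s-1}x^{\frac{k_j-1}{k_j}}=0$ in the interval $[1,\infty)$, and let $r=\left\lceil\frac{\log n_s}{\log x_0}\right\rceil+1$. Then $ch(K_{n_0,\dots,n_s})\le r$ for all such tuples with $n_s$ large enough (in terms of $s$ and $\epsilon$).
   Context: All logarithms are to base 2. For a graph $G=(V,E)$, the choice number $ch(G)$ is the minimum integer $k$ such that for every assignment of a list $S(v)$ of at least $k$ colors to each vertex $v\in V$, there is a proper vertex coloring of $G$ assigning to each vertex $v$ a color from $S(v)$. $K_{n_0,\dots,n_s}$ denotes the complete $(s+1)$-partite graph with parts of sizes $n_0,\dots,n_s$. *)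

theory Defs
  imports Complex_Main
begin

text \<open>A list assignment S gives each vertex a set of colours (colours are natural numbers; since
  graphs here are finite, this is no loss of generality).\<close>

definition choosable :: "'a set \<Rightarrow> ('a \<Rightarrow> 'a \<Rightarrow> bool) \<Rightarrow> nat \<Rightarrow> bool" where
  "choosable V E k \<longleftrightarrow>
     (\<forall>S :: 'a \<Rightarrow> nat set. (\<forall>v\<in>V. finite (S v) \<and> card (S v) \<ge> k) \<longrightarrow>
        (\<exists>c :: 'a \<Rightarrow> nat. (\<forall>v\<in>V. c v \<in> S v) \<and>
                          (\<forall>u\<in>V. \<forall>v\<in>V. E u v \<longrightarrow> c u \<noteq> c v)))"

definition choice_number :: "'a set \<Rightarrow> ('a \<Rightarrow> 'a \<Rightarrow> bool) \<Rightarrow> nat" where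
  "choice_number V E = (LEAST k. choosable V E k)"

text \<open>Complete (s+1)-partite graph K_{n_0,...,n_s}: vertices (i,j) with i \<le> s, j < n i;
  two vertices are adjacent iff they lie in different parts.\<close>
definition kmp_vertices :: "nat \<Rightarrow> (nat \<Rightarrow> nat) \<Rightarrow> (nat \<times> nat) set" where
  "kmp_vertices s n = {(i, j). i \<le> s \<and> j < n i}"

definition kmp_adj :: "(nat \<times> nat) \<Rightarrow> (nat \<times> nat) \<Rightarrow> bool" where
  "kmp_adj u v \<longleftrightarrow> fst u \<noteq> fst v"

end

theory Submission imports Defs "HOL-Library.FuncSet" begin

lemma combi:
  fixes s R :: nat and p :: "nat \<Rightarrow> real" and n :: "nat \<Rightarrow> nat"
    and S :: "nat \<times> nat \<Rightarrow> nat set"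
  assumes p0: "\<And>j. j \<le> s \<Longrightarrow> 0 \<le> p j"
    and p1: "(\<Sum>j\<le>s. p j) = 1"
    and small: "(\<Sum>j\<le>s. real (n j) * (1 - p j) ^ R) < 1"
    and SV: "\<forall>v\<in>kmp_vertices s n. finite (S v) \<and> card (S v) \<ge> R"
  shows "\<exists>c. (\<forall>v\<in>kmp_vertices s n. c v \<in> S v) \<and>
           (\<forall>u\<in>kmp_vertices s n. \<forall>v\<in>kmp_vertices s n. kmp_adj u v \<longrightarrow> c u \<noteq> c v)"
proof -
  define V where "V = kmp_vertices s n"
  have V_eq: "V = Sigma {..s} (\<lambda>j. {..<n j})" unfolding V_def kmp_vertices_def by auto
  have finV: "finite V" unfolding V_eq by auto
  define C where "C = \<Union>(S ` V)"
  have finC: "finite C" unfolding C_def using finV SV V_def by auto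
  define W where "W g = (\<Prod>c\<in>C. p (g c))" for g :: "nat \<Rightarrow> nat"
  define P where "P = PiE C (\<lambda>_. {..s})"
  define E where "E v = PiE C (\<lambda>c. if c \<in> S v then {..s} - {fst v} else {..s})" for v
  have p1': "p j \<le> 1" if "j \<le> s" for j
  proof -
    have "(\<Sum>i\<in>{..s}-{j}. p i) \<ge> 0" by (intro sum_nonneg) (auto intro: p0)
    moreover have "(\<Sum>i\<le>s. p i) = p j + (\<Sum>i\<in>{..s}-{j}. p i)"
      using that by (subst sum.remove[of _ j]) auto
    ultimately show ?thesis using p1 by linarith
  qed
  have Wnn: "W g \<ge> 0" if "g \<in> P" for g
    unfolding W_def using that P_def by (auto intro!: prod_nonneg p0)
  have totalW: "(\<Sum>g\<in>P. W g) = 1"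
  proof -
    have "(\<Sum>g\<in>P. W g) = (\<Prod>c\<in>C. \<Sum>j\<in>{..s}. p j)"
      unfolding P_def W_def by (subst prod_sum_PiE) (use finC in auto)
    also have "\<dots> = 1" using p1 by simp
    finally show ?thesis .
  qed
  have EW: "(\<Sum>g\<in>E v. W g) \<le> (1 - p (fst v)) ^ R" if v: "v \<in> V" for v
  proof -
    have SvC: "S v \<subseteq> C" unfolding C_def using v by auto
    have fv: "fst v \<le> s" using v unfolding V_eq by auto
    have "(\<Sum>g\<in>E v. W g) = (\<Prod>c\<in>C. \<Sum>j\<in>(if c \<in> S v then {..s} - {fst v} else {..s}). p j)"
      unfolding E_def W_def by (subst prod_sum_PiE) (use finC in auto)
    also have "\<dots> = (\<Prod>c\<in>C. if c \<in> S v then 1 - p (fst v) else 1)"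
    proof (rule prod.cong[OF refl])
      fix c assume "c \<in> C"
      have "(\<Sum>j\<in>{..s}-{fst v}. p j) = 1 - p (fst v)"
        using p1 fv by (subst sum_diff1) auto
      then show "(\<Sum>j\<in>(if c \<in> S v then {..s} - {fst v} else {..s}). p j) =
        (if c \<in> S v then 1 - p (fst v) else 1)" using p1 by auto
    qed
    also have "\<dots> = (1 - p (fst v)) ^ card (S v)"
      using finC SvC by (simp add: prod.If_cases Int_absorb1)
    also have "\<dots> \<le> (1 - p (fst v)) ^ R"
      using SV v V_def p0 p1' fv by (intro power_decreasing) auto
    finally show ?thesis .
  qed
  have sumE: "(\<Sum>v\<in>V. \<Sum>g\<in>E v. W g) < 1"
  proof -
    have "(\<Sum>v\<in>V. \<Sum>g\<in>E v. W g) \<le> (\<Sum>v\<in>V. (1 - p (fst v)) ^ R)"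
      by (intro sum_mono EW)
    also have "\<dots> = (\<Sum>j\<le>s. \<Sum>i<n j. (1 - p j) ^ R)"
      unfolding V_eq by (subst sum.Sigma) (auto simp: split_beta)
    also have "\<dots> = (\<Sum>j\<le>s. real (n j) * (1 - p j) ^ R)" by simp
    finally show ?thesis using small by linarith
  qed
  have EP: "E v \<subseteq> P" for v unfolding E_def P_def by (intro PiE_mono) auto
  have "\<exists>g\<in>P. \<forall>v\<in>V. g \<notin> E v"
  proof (rule ccontr)
    assume "\<not> ?thesis"
    then have cov: "\<forall>g\<in>P. \<exists>v\<in>V. g \<in> E v" by blast
    have finP: "finite P" unfolding P_def using finC by (auto intro: finite_PiE)
    have "1 = (\<Sum>g\<in>P. W g)" using totalW by simp
    also have "\<dots> \<le> (\<Sum>g\<in>P. \<Sum>v\<in>V. if g \<in> E v then W g else 0)"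
    proof (rule sum_mono)
      fix g assume g: "g \<in> P"
      then obtain v where v: "v \<in> V" "g \<in> E v" using cov by blast
      have "(\<Sum>v\<in>V. if g \<in> E v then W g else 0) = (if g \<in> E v then W g else 0) +
          (\<Sum>u\<in>V-{v}. if g \<in> E u then W g else 0)"
        using v finV by (subst sum.remove[of _ v]) auto
      moreover have "(\<Sum>u\<in>V-{v}. if g \<in> E u then W g else 0) \<ge> 0"
        using Wnn g by (intro sum_nonneg) auto
      ultimately show "W g \<le> (\<Sum>v\<in>V. if g \<in> E v then W g else 0)" using v by simp
    qed
    also have "\<dots> = (\<Sum>v\<in>V. \<Sum>g\<in>P. if g \<in> E v then W g else 0)" by (rule sum.swap)
    also have "\<dots> = (\<Sum>v\<in>V. \<Sum>g\<in>E v. W g)"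
    proof (rule sum.cong[OF refl])
      fix v show "(\<Sum>g\<in>P. if g \<in> E v then W g else 0) = (\<Sum>g\<in>E v. W g)"
        using EP[of v] finP by (simp add: sum.If_cases Int_absorb1)
    qed
    finally show False using sumE by linarith
  qed
  then obtain g where gP: "g \<in> P" and gE: "\<forall>v\<in>V. g \<notin> E v" by blast
  have ex: "\<exists>c\<in>S v. g c = fst v" if v: "v \<in> V" for v
  proof (rule ccontr)
    assume "\<not> ?thesis"
    then have "g \<in> E v" using gP unfolding E_def P_def PiE_iff by auto
    then show False using gE v by blast
  qed
  define col where "col v = (SOME c. c \<in> S v \<and> g c = fst v)" for v
  have col: "col v \<in> S v \<and> g (col v) = fst v" if "v \<in> V" for v
    unfolding col_def using someI_ex[OF ex[OF that, unfolded Bex_def]] .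
  show ?thesis
    by (rule exI[of _ col]) (metis col V_def kmp_adj_def)
qed

lemma root_props:
  fixes s :: nat and \<epsilon> :: real and e :: "nat \<Rightarrow> real"
  assumes eps: "0 < \<epsilon>" "\<epsilon> < 1" and e: "\<And>j. j < s \<Longrightarrow> 0 \<le> e j \<and> e j \<le> 1"
  defines "f \<equiv> (\<lambda>x. (s + \<epsilon>) * x - 1 - (\<Sum>j<s. x powr (1 - e j)))"
  defines "g \<equiv> (\<lambda>x. s + \<epsilon> - 1 / x - (\<Sum>j<s. x powr (- e j)))"
  shows "\<exists>!x. x \<ge> 1 \<and> f x = 0"
    and "\<And>x. x \<ge> 1 \<Longrightarrow> f x = 0 \<Longrightarrow> x > 1 \<and> x \<le> 1 / \<epsilon> \<and> g x = 0"
proof -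
  have fg: "f x = x * g x" if "x > 0" for x
  proof -
    have "x powr (1 - e j) = x * x powr (- e j)" for j
      using that by (simp add: powr_diff powr_minus divide_inverse)
    then show ?thesis unfolding f_def g_def using that
      by (simp add: algebra_simps sum_distrib_left)
  qed
  have gmono: "g x < g y" if "1 \<le> x" "x < y" for x y
  proof -
    have "y powr (- e j) \<le> x powr (- e j)" if "j < s" for j
      using e[OF that] \<open>1 \<le> x\<close> \<open>x < y\<close> by (intro powr_mono2') auto
    then have "(\<Sum>j<s. y powr (- e j)) \<le> (\<Sum>j<s. x powr (- e j))" by (intro sum_mono) auto
    moreover have "1 / y < 1 / x" using that by (simp add: frac_less2)
    ultimately show ?thesis unfolding g_def by linarith
  qed
  have f1: "f 1 < 0" unfolding f_def using eps by simp
  have fe: "f (1/\<epsilon>) \<ge> 0"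
  proof -
    have "(1/\<epsilon>) powr (1 - e j) \<le> (1/\<epsilon>) powr 1" if "j < s" for j
      using e[OF that] eps by (intro powr_mono) (auto simp: field_simps)
    then have "(\<Sum>j<s. (1/\<epsilon>) powr (1 - e j)) \<le> (\<Sum>j<s. 1/\<epsilon>)"
      using eps by (intro sum_mono) auto
    then show ?thesis unfolding f_def using eps by (simp add: field_simps)
  qed
  have cont: "continuous_on {1..1/\<epsilon>} f"
    unfolding f_def by (intro continuous_intros) auto
  have le: "1 \<le> 1/\<epsilon>" using eps by simp
  obtain x where x: "1 \<le> x" "x \<le> 1/\<epsilon>" "f x = 0"
    using IVT'[of f 1 0 "1/\<epsilon>", OF _ _ le cont] f1 fe by auto
  have uniq: "y = x" if "y \<ge> 1" "f y = 0" for y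
  proof -
    have "g y = 0" "g x = 0" using fg that x by auto
    then show ?thesis using gmono[of x y] gmono[of y x] that x by (cases "x < y"; cases "y < x") auto
  qed
  show "\<exists>!x. x \<ge> 1 \<and> f x = 0" using x uniq by blast
  fix y assume y: "y \<ge> 1" "f y = 0"
  then have "y = x" by (rule uniq)
  moreover have "x \<noteq> 1" using x f1 by auto
  ultimately show "y > 1 \<and> y \<le> 1 / \<epsilon> \<and> g y = 0" using x fg by auto
qed

lemma main_fixed:
  fixes s M :: nat and \<epsilon> x0 :: real and n :: "nat \<Rightarrow> nat"
  assumes s1: "s \<ge> 1" and eps: "0 < \<epsilon>" "\<epsilon> < 1"
    and n0: "2 \<le> n 0" and nmono: "\<forall>i<s. n i \<le> n (Suc i)"
    and M: "(1 - \<epsilon> / (s + 1)) ^ M < 1 / (s + 1)"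
    and LM: "log 2 (1 / \<epsilon>) * M \<le> log 2 (n s)"
    and x0: "x0 \<ge> 1"
    and eq: "(s + \<epsilon>) * x0 - 1 - (\<Sum>j<s. x0 powr ((log 2 (n s) / log 2 (n j) - 1) / (log 2 (n s) / log 2 (n j)))) = 0"
  shows "int (choice_number (kmp_vertices s n) kmp_adj) \<le> \<lceil>log 2 (n s) / log 2 x0\<rceil> + 1"
proof -
  have mono_d: "i + d \<le> s \<Longrightarrow> n i \<le> n (i + d)" for i d
  proof (induction d)
    case (Suc d)
    then have "n (i + d) \<le> n (Suc (i + d))" using nmono by auto
    then show ?case using Suc by simp
  qed simp
  have mono: "n i \<le> n j" if "i \<le> j" "j \<le> s" for i j
    using mono_d[of i "j - i"] that by simp
  define lg where "lg j = log 2 (real (n j))" for j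
  define L where "L = lg s"
  have n2: "2 \<le> n j" if "j \<le> s" for j using mono[of 0 j] that n0 by simp
  have l1: "1 \<le> lg j" if "j \<le> s" for j
    using n2[OF that] unfolding lg_def by simp
  have lL: "lg j \<le> L" if "j \<le> s" for j
    using n2[OF that] mono[OF _ order.refl, of j] that unfolding lg_def L_def by simp
  have Lpos: "L > 0" using l1[of s] unfolding L_def by simp
  define e where "e j = lg j / L" for j
  have e01: "0 \<le> e j \<and> e j \<le> 1" if "j \<le> s" for j
    using l1[OF that] lL[OF that] Lpos unfolding e_def by auto
  have es: "e s = 1" unfolding e_def L_def using Lpos L_def by simp
  have expeq: "(log 2 (n s) / log 2 (n j) - 1) / (log 2 (n s) / log 2 (n j)) = 1 - e j"
    if "j \<le> s" for j
  proof -
    have "lg j > 0" using l1[OF that] by simp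
    then show ?thesis using Lpos unfolding e_def L_def lg_def by (simp add: field_simps)
  qed
  have eq': "(s + \<epsilon>) * x0 - 1 - (\<Sum>j<s. x0 powr (1 - e j)) = 0"
    using eq expeq by (metis (no_types, lifting) less_imp_le_nat lessThan_iff sum.cong)
  have rp: "x0 > 1 \<and> x0 \<le> 1 / \<epsilon> \<and> s + \<epsilon> - 1 / x0 - (\<Sum>j<s. x0 powr (- e j)) = 0"
    using root_props(2)[of \<epsilon> s e, OF eps _ x0 eq'] e01 by auto
  define q where "q j = x0 powr (- e j)" for j
  have qs: "q s = 1 / x0" unfolding q_def es using rp by (simp add: powr_minus divide_inverse)
  have sumq: "(\<Sum>j\<le>s. q j) = s + \<epsilon>"
    using rp qs unfolding q_def by (simp add: lessThan_Suc_atMost[symmetric])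
  have q1: "q j \<le> 1" if "j \<le> s" for j
  proof -
    have "x0 powr (- e j) \<le> x0 powr 0" using e01[OF that] x0 by (intro powr_mono) auto
    then show ?thesis unfolding q_def using rp by simp
  qed
  have qlow: "q j \<ge> \<epsilon>" if "j \<le> s" for j
  proof -
    have "x0 powr (-1) \<le> x0 powr (- e j)" using e01[OF that] x0 by (intro powr_mono) auto
    moreover have "x0 powr (-1) = 1 / x0" using rp by (simp add: powr_minus divide_inverse)
    moreover have "1 / x0 \<ge> \<epsilon>" using rp eps by (simp add: field_simps)
    ultimately show ?thesis unfolding q_def by linarith
  qed
  define lx where "lx = log 2 x0"
  have lxpos: "lx > 0" unfolding lx_def using rp by simp
  have lxB: "lx \<le> log 2 (1 / \<epsilon>)" unfolding lx_def using rp eps by simp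
  define r where "r = \<lceil>L / lx\<rceil> + 1"
  define R where "R = nat r"
  have rL: "real_of_int r \<ge> L / lx + 1" unfolding r_def by linarith
  have r0: "r \<ge> 0" using rL Lpos lxpos
    by (smt (verit, ccfv_SIG) divide_pos_pos of_int_0_le_iff)
  have RR: "real R = real_of_int r" unfolding R_def using r0 by simp
  have RL: "real R * lx \<ge> L"
  proof -
    have "real R \<ge> L / lx" using rL RR by linarith
    then show ?thesis using lxpos by (simp add: field_simps)
  qed
  have RM: "R \<ge> M"
  proof -
    have B: "log 2 (1 / \<epsilon>) > 0" using lxpos lxB by linarith
    have "real M \<le> L / log 2 (1 / \<epsilon>)" using LM B unfolding L_def lg_def
      by (simp add: field_simps mult.commute)
    also have "\<dots> \<le> L / lx" using B lxpos lxB Lpos by (intro divide_left_mono) auto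
    also have "\<dots> \<le> real R" using rL RR by linarith
    finally show ?thesis by simp
  qed
  define \<delta> where "\<delta> = \<epsilon> / (s + 1)"
  have \<delta>: "0 < \<delta>" "\<delta> \<le> \<epsilon>" unfolding \<delta>_def using eps by (auto simp: field_simps)
  define p where "p j = 1 - q j + \<delta>" for j
  have tm: "real (n j) * (1 - p j) ^ R < 1 / (s + 1)" if j: "j \<le> s" for j
  proof -
    have A: "1 - p j = q j - \<delta>" unfolding p_def by simp
    have "0 \<le> q j - \<delta>" using qlow[OF j] \<delta> by linarith
    moreover have "q j - \<delta> \<le> q j * (1 - \<delta>)"
    proof -
      have "\<delta> * q j \<le> \<delta> * 1" using q1[OF j] \<delta> by (intro mult_left_mono) auto
      then show ?thesis by (simp add: algebra_simps)
    qed
    ultimately have "(q j - \<delta>) ^ R \<le> (q j * (1 - \<delta>)) ^ R" by (simp add: power_mono)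
    then have step1: "real (n j) * (1 - p j) ^ R \<le> (real (n j) * q j ^ R) * (1 - \<delta>) ^ R"
      unfolding A by (simp add: power_mult_distrib mult.assoc mult_left_mono)
    have nq: "real (n j) * q j ^ R \<le> 1"
    proof -
      have x0p: "x0 = 2 powr lx" unfolding lx_def using rp by simp
      have "q j ^ R = q j powr real R" using rp unfolding q_def by (simp add: powr_realpow)
      also have "\<dots> = 2 powr (lx * (- e j) * real R)" unfolding q_def x0p by (simp add: powr_powr)
      finally have qR: "q j ^ R = 2 powr (lx * (- e j) * real R)" .
      have nj: "real (n j) = 2 powr lg j" unfolding lg_def using n2[OF j] by simp
      have "real (n j) * q j ^ R = 2 powr (lg j - lx * e j * real R)"
        unfolding nj qR by (simp add: powr_add[symmetric])
      also have "\<dots> \<le> 2 powr 0"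
      proof (intro powr_mono)
        have "lg j * L \<le> lg j * (real R * lx)" using RL l1[OF j] by (intro mult_left_mono) auto
        then have "lg j \<le> lx * e j * real R" unfolding e_def using Lpos
          by (simp add: field_simps)
        then show "lg j - lx * e j * real R \<le> 0" by simp
      qed auto
      finally show ?thesis by simp
    qed
    have "real (n j) * (1 - p j) ^ R \<le> (1 - \<delta>) ^ R"
    proof -
      have d0: "0 \<le> (1 - \<delta>) ^ R" using \<delta> eps unfolding \<delta>_def by (simp add: field_simps)
      then show "real (n j) * (1 - p j) ^ R \<le> (1 - \<delta>) ^ R"
        using step1 mult_right_mono[OF nq d0] by linarith
    qed
    also have "\<dots> \<le> (1 - \<delta>) ^ M" using RM \<delta> eps by (intro power_decreasing) auto
    also have "\<dots> < 1 / (s + 1)" using M unfolding \<delta>_def .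
    finally show ?thesis .
  qed
  have small: "(\<Sum>j\<le>s. real (n j) * (1 - p j) ^ R) < 1"
  proof -
    have "(\<Sum>j\<le>s. real (n j) * (1 - p j) ^ R) < (\<Sum>j\<le>s. 1 / (s + 1))"
      by (intro sum_strict_mono tm) auto
    also have "\<dots> = 1" by simp
    finally show ?thesis .
  qed
  have psum: "(\<Sum>j\<le>s. p j) = 1"
    unfolding p_def using sumq by (simp add: sum.distrib sum_subtractf \<delta>_def)
  have p0: "0 \<le> p j" if "j \<le> s" for j using q1[OF that] \<delta> unfolding p_def by simp
  have "choosable (kmp_vertices s n) kmp_adj R"
    unfolding choosable_def using combi[of s p n R, OF p0 psum small] by blast
  then have "choice_number (kmp_vertices s n) kmp_adj \<le> R"
    unfolding choice_number_def by (rule Least_le)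
  then have "int (choice_number (kmp_vertices s n) kmp_adj) \<le> r" using R_def r0 by linarith
  then show ?thesis unfolding r_def lx_def L_def lg_def .
qed

lemma n_bounds:
  fixes n :: "nat \<Rightarrow> nat"
  assumes n0: "2 \<le> n 0" and nmono: "\<forall>i<s. n i \<le> n (Suc i)" and j: "j \<le> s"
  shows "2 \<le> n j \<and> n j \<le> n s"
proof -
  have mono_d: "i + d \<le> s \<Longrightarrow> n i \<le> n (i + d)" for i d
  proof (induction d)
    case (Suc d)
    then have "n (i + d) \<le> n (Suc (i + d))" using nmono by auto
    then show ?case using Suc by simp
  qed simp
  have mono: "n i \<le> n k" if "i \<le> k" "k \<le> s" for i k
    using mono_d[of i "k - i"] that by simp
  show ?thesis using mono[of 0 j] mono[of j s] j n0 by simp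
qed

lemma ex1_root:
  fixes s :: nat and \<epsilon> :: real and n :: "nat \<Rightarrow> nat"
  assumes eps: "0 < \<epsilon>" "\<epsilon> < 1"
    and n0: "2 \<le> n 0" and nmono: "\<forall>i<s. n i \<le> n (Suc i)"
  shows "\<exists>!x. x \<ge> 1 \<and> (s + \<epsilon>) * x - 1 - (\<Sum>j<s. x powr ((log 2 (n s) / log 2 (n j) - 1) / (log 2 (n s) / log 2 (n j)))) = 0"
proof -
  define e where "e j = log 2 (n j) / log 2 (n s)" for j
  have nb: "2 \<le> n j \<and> n j \<le> n s" if "j \<le> s" for j using n_bounds[OF n0 nmono that] .
  have e01: "0 \<le> e j \<and> e j \<le> 1" if "j < s" for j
    using nb[of j] nb[of s] that unfolding e_def by (auto simp: field_simps)
  have expeq: "(log 2 (n s) / log 2 (n j) - 1) / (log 2 (n s) / log 2 (n j)) = 1 - e j"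
    if "j < s" for j
  proof -
    have "log 2 (n j) > 0" "log 2 (n s) > 0" using nb[of j] nb[of s] that by auto
    then show ?thesis unfolding e_def by (simp add: field_simps)
  qed
  have "\<exists>!x. x \<ge> 1 \<and> (s + \<epsilon>) * x - 1 - (\<Sum>j<s. x powr (1 - e j)) = 0"
    using root_props(1)[of \<epsilon> s e, OF eps] e01 by auto
  moreover have "(\<Sum>j<s. x powr ((log 2 (n s) / log 2 (n j) - 1) / (log 2 (n s) / log 2 (n j))))
     = (\<Sum>j<s. x powr (1 - e j))" for x
    using expeq by (intro sum.cong) auto
  ultimately show ?thesis by simp
qed

theorem theorem5:
  fixes s :: nat and \<epsilon> :: real
  assumes "s \<ge> 1" and "0 < \<epsilon>" and "\<epsilon> < 1"
  shows "\<exists>N :: nat. \<forall>n :: nat \<Rightarrow> nat.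
           (2 \<le> n 0 \<and> (\<forall>i<s. n i \<le> n (Suc i)) \<and> n s \<ge> N) \<longrightarrow>
           (let k = (\<lambda>i. log 2 (n s) / log 2 (n i));
                x0 = (THE x :: real. x \<ge> 1 \<and>
                        (s + \<epsilon>) * x - 1 - (\<Sum>j<s. x powr ((k j - 1) / k j)) = 0);
                r = \<lceil>log 2 (n s) / log 2 x0\<rceil> + 1
            in int (choice_number (kmp_vertices s n) kmp_adj) \<le> r)"
proof -
  define \<delta> where "\<delta> = \<epsilon> / (s + 1)"
  have \<delta>: "0 < \<delta>" "\<delta> < 1" unfolding \<delta>_def using assms by (auto simp: field_simps)
  obtain M where M: "(1 - \<delta>) ^ M < 1 / (s + 1)"
    using real_arch_pow_inv[of "1 / (s + 1)" "1 - \<delta>"] \<delta> by auto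
  define B where "B = log 2 (1 / \<epsilon>)"
  have B0: "B > 0" unfolding B_def using assms by simp
  define N :: nat where "N = 2 ^ (M * nat \<lceil>B\<rceil>)"
  show ?thesis
  proof (intro exI[of _ N] allI impI)
    fix n :: "nat \<Rightarrow> nat"
    assume H: "2 \<le> n 0 \<and> (\<forall>i<s. n i \<le> n (Suc i)) \<and> N \<le> n s"
    have LM: "log 2 (1 / \<epsilon>) * M \<le> log 2 (n s)"
    proof -
      have "B \<le> real (nat \<lceil>B\<rceil>)" using B0 by linarith
      then have "B * M \<le> real (nat \<lceil>B\<rceil>) * M" by (intro mult_right_mono) auto
      also have "\<dots> = log 2 (real N)" unfolding N_def by (simp add: log_nat_power mult.commute)
      also have "\<dots> \<le> log 2 (n s)"
      proof -
        have N0: "real N > 0" unfolding N_def by simp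
        have "real N \<le> real (n s)" using H by simp
        then show ?thesis using N0 by (subst log_le_cancel_iff) auto
      qed
      finally show ?thesis unfolding B_def .
    qed
    note ex = ex1_root[of \<epsilon> n s, OF assms(2,3)] H
    have x0: "let x0 = (THE x :: real. x \<ge> 1 \<and>
              (s + \<epsilon>) * x - 1 - (\<Sum>j<s. x powr ((log 2 (n s) / log 2 (n j) - 1) / (log 2 (n s) / log 2 (n j)))) = 0)
         in x0 \<ge> 1 \<and> (s + \<epsilon>) * x0 - 1 - (\<Sum>j<s. x0 powr ((log 2 (n s) / log 2 (n j) - 1) / (log 2 (n s) / log 2 (n j)))) = 0"
      unfolding Let_def using theI'[OF ex1_root[of \<epsilon> n s, OF assms(2,3)]] H by blast
    show "let k = (\<lambda>i. log 2 (n s) / log 2 (n i));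
                x0 = (THE x :: real. x \<ge> 1 \<and>
                        (s + \<epsilon>) * x - 1 - (\<Sum>j<s. x powr ((k j - 1) / k j)) = 0);
                r = \<lceil>log 2 (n s) / log 2 x0\<rceil> + 1
            in int (choice_number (kmp_vertices s n) kmp_adj) \<le> r"
      unfolding Let_def
      using main_fixed[of s \<epsilon> n M, OF assms(1,2,3)] H M LM x0 unfolding Let_def \<delta>_def by blast
  qed
qed
end
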